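(* Let $H=K_{i_1,1,\dots,1}$ be the complete multipartite graph with $m$ parts, one part of size $i_1\le 2$ and all other parts of size $1$. Then $b_H(n)=\Theta(n^{m-1})$ as $n\to\infty$.
   Context: For a graph $G$, $\mathrm{cl}(G)$ denotes its clique complex. For a finite simple graph $H$ and a fixed field $\mathbb{K}$, $b_H(n)=\max_G \sum_{i\ge -1}\dim_{\mathbb{K}}\widetilde H_i(\mathrm{cl}(G);\mathbb{K})$, where $G$ ranges over all simple graphs on at most $n$ vertices containing no induced copy of $H$ (reduced homology, the empty graph contributing $1$). *)

theory Defs
  imports Main "HOL-Library.Function_Algebras" "HOL-Library.Landau_Symbols"
begin

definition simple_graph :: "'a set \<Rightarrow> 'a set set \<Rightarrow> bool" where
  "simple_graph V E \<longleftrightarrow> finite V \<and> (\<forall>e\<in>E. \<exists>u v. e = {u, v} \<and> u \<noteq> v \<and> u \<in> V \<and> v \<in> V)"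

definition has_induced_copy :: "'b set \<Rightarrow> 'b set set \<Rightarrow> 'a set \<Rightarrow> 'a set set \<Rightarrow> bool" where
  "has_induced_copy VH EH V E \<longleftrightarrow>
     (\<exists>f. inj_on f VH \<and> f ` VH \<subseteq> V \<and>
          (\<forall>u\<in>VH. \<forall>v\<in>VH. u \<noteq> v \<longrightarrow> ({u, v} \<in> EH \<longleftrightarrow> {f u, f v} \<in> E)))"

text \<open>Complete multipartite graph with part sizes given by the list ps;
  part j consists of the vertices (j,k) with k < ps!j.\<close>
definition cmp_vertices :: "nat list \<Rightarrow> (nat \<times> nat) set" where
  "cmp_vertices ps = {(j, k). j < length ps \<and> k < ps ! j}"

definition cmp_edges :: "nat list \<Rightarrow> (nat \<times> nat) set set" where
  "cmp_edges ps = {{x, y} | x y. x \<in> cmp_vertices ps \<and> y \<in> cmp_vertices ps \<and> fst x \<noteq> fst y}"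

text \<open>Clique complex: faces are the finite cliques; an i-face has i+1 vertices
  (the empty face is the unique (-1)-face, giving reduced homology).\<close>
definition is_clique :: "nat set \<Rightarrow> nat set set \<Rightarrow> nat set \<Rightarrow> bool" where
  "is_clique V E \<sigma> \<longleftrightarrow> \<sigma> \<subseteq> V \<and> (\<forall>u\<in>\<sigma>. \<forall>v\<in>\<sigma>. u \<noteq> v \<longrightarrow> {u, v} \<in> E)"

definition clique_faces :: "nat set \<Rightarrow> nat set set \<Rightarrow> int \<Rightarrow> nat set set" where
  "clique_faces V E i = {\<sigma>. is_clique V E \<sigma> \<and> finite \<sigma> \<and> int (card \<sigma>) = i + 1}"

definition chains :: "nat set \<Rightarrow> nat set set \<Rightarrow> int \<Rightarrow> (nat set \<Rightarrow> 'k::field) set" where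
  "chains V E i = {c. \<forall>\<sigma>. \<sigma> \<notin> clique_faces V E i \<longrightarrow> c \<sigma> = 0}"

definition chain_scale :: "'k::field \<Rightarrow> (nat set \<Rightarrow> 'k) \<Rightarrow> (nat set \<Rightarrow> 'k)" where
  "chain_scale a c = (\<lambda>\<sigma>. a * c \<sigma>)"

text \<open>Simplicial boundary map C_i -> C_(i-1), vertices ordered as natural numbers:
  d[x_0<...<x_i] = sum_j (-1)^j [x_0,...,x_j omitted,...,x_i].\<close>
definition boundary :: "nat set \<Rightarrow> nat set set \<Rightarrow> int \<Rightarrow> (nat set \<Rightarrow> 'k::field) \<Rightarrow> (nat set \<Rightarrow> 'k)" where
  "boundary V E i c = (\<lambda>\<tau>. if \<tau> \<in> clique_faces V E (i - 1) then
      (\<Sum>x\<in>{x \<in> V - \<tau>. insert x \<tau> \<in> clique_faces V E i}.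
          (-1) ^ card {y \<in> \<tau>. y < x} * c (insert x \<tau>))
    else 0)"

text \<open>dim of reduced homology H~_i(cl(G); k) = dim Z_i - dim B_i.\<close>
definition reduced_betti :: "'k::field itself \<Rightarrow> nat set \<Rightarrow> nat set set \<Rightarrow> int \<Rightarrow> nat" where
  "reduced_betti K V E i =
     vector_space.dim (chain_scale :: 'k \<Rightarrow> _) {c \<in> chains V E i. boundary V E i c = 0}
     - vector_space.dim (chain_scale :: 'k \<Rightarrow> _) (boundary V E (i + 1) ` chains V E (i + 1))"

definition total_betti :: "'k::field itself \<Rightarrow> nat set \<Rightarrow> nat set set \<Rightarrow> nat" where
  "total_betti K V E = (\<Sum>i\<in>{-1..int (card V)}. reduced_betti K V E i)"

text \<open>b_H(n): maximum total reduced Betti number of clique complexes of induced-H-free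
  graphs on at most n vertices (w.l.o.g. vertex set contained in {0..<n}).\<close>
definition b_H :: "'k::field itself \<Rightarrow> 'b set \<Rightarrow> 'b set set \<Rightarrow> nat \<Rightarrow> nat" where
  "b_H K VH EH n = Max {total_betti K V E | V E.
      simple_graph V E \<and> V \<subseteq> {..<n} \<and> \<not> has_induced_copy VH EH V E}"

end

theory Submission
  imports Defs "HOL-Library.FuncSet"
begin

context vector_space
begin

lemma indep_finite_in_span:
  assumes "independent B" "B \<subseteq> span W" "finite W"
  shows "finite B"
  using independent_span_bound[OF assms(3,1,2)] by simp

lemma dim_subset_fin:
  assumes "S \<subseteq> T" "T \<subseteq> span W" "finite W"
  shows "dim S \<le> dim T"
proof -
  obtain B where B: "B \<subseteq> T" "independent B" "T \<subseteq> span B" "card B = dim T"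
    using basis_exists by blast
  have "finite B" using indep_finite_in_span[OF B(2) _ assms(3)] B(1) assms(2) by blast
  have "S \<subseteq> span B" using assms(1) B(3) by blast
  then have "dim S \<le> card B" using dim_le_card \<open>finite B\<close> by blast
  then show ?thesis using B(4) by simp
qed

lemma indep_card_le_dim:
  assumes "A \<subseteq> S" "independent A" "S \<subseteq> span W" "finite W"
  shows "card A \<le> dim S"
proof -
  obtain B where B: "A \<subseteq> B" "B \<subseteq> S" "independent B" "S \<subseteq> span B"
    using maximal_independent_subset_extend[OF assms(1,2)] by blast
  have "finite B" using indep_finite_in_span[OF B(3) _ assms(4)] B(2) assms(3) by blast
  have "card B = dim S" using basis_card_eq_dim[OF B(2,4,3)] .
  then show ?thesis using card_mono[OF \<open>finite B\<close> B(1)] by simp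
qed

end

context vector_space_pair
begin
end

lemma (in vector_space) rank_nullity:
  assumes lin: "Vector_Spaces.linear scale scale f" and S: "subspace S" and SW: "S \<subseteq> span W" and W: "finite W"
  shows "dim S = dim {x\<in>S. f x = 0} + dim (f ` S)"
proof -
  interpret L: Vector_Spaces.linear scale scale f by fact
  let ?K = "{x\<in>S. f x = 0}"
  obtain BK where BK: "BK \<subseteq> ?K" "independent BK" "?K \<subseteq> span BK" "card BK = dim ?K"
    using basis_exists by blast
  have finBK: "finite BK" using indep_finite_in_span[OF BK(2) _ W] BK(1) SW by blast
  obtain C where C: "C \<subseteq> f ` S" "independent C" "f ` S \<subseteq> span C" "card C = dim (f ` S)"
    using basis_exists by blast
  have fSW: "f ` S \<subseteq> span (f ` W)" using L.spans_image[OF SW] .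
  have finC: "finite C" using indep_finite_in_span[OF C(2) _ finite_imageI[OF W]] C(1) fSW by blast
  obtain g where g: "\<And>c. c \<in> C \<Longrightarrow> g c \<in> S \<and> f (g c) = c"
  proof -
    have "\<forall>c\<in>C. \<exists>x. x \<in> S \<and> f x = c" using C(1) by blast
    then show ?thesis using that by metis
  qed
  define P where "P = g ` C"
  have injg: "inj_on g C" by (rule inj_onI) (metis g)
  have finP: "finite P" using finC P_def by simp
  have cardP: "card P = card C" using card_image[OF injg] P_def by simp
  have PS: "P \<subseteq> S" using g P_def by auto
  have fP: "f ` P = C" unfolding P_def image_image using g by simp
  have C0: "0 \<notin> C" using C(2) dependent_zero by blast
  have disj: "BK \<inter> P = {}"
  proof (rule ccontr)
    assume "BK \<inter> P \<noteq> {}"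
    then obtain x where "x \<in> BK" "x \<in> P" by blast
    then have "f x = 0" using BK(1) by blast
    moreover have "f x \<in> C" using \<open>x \<in> P\<close> fP by blast
    ultimately show False using C0 by simp
  qed
  have injfP: "inj_on f P" using g P_def by (auto intro!: inj_onI)
  have span1: "S \<subseteq> span (BK \<union> P)"
  proof
    fix x assume x: "x \<in> S"
    have "f x \<in> span (f ` P)" using C(3) x fP by blast
    then obtain y where y: "y \<in> span P" "f x = f y" using L.span_image by blast
    have yS: "y \<in> S" using y(1) PS S span_minimal by blast
    have "x - y \<in> S" using x yS S by (simp add: subspace_diff)
    moreover have "f (x - y) = 0" using y(2) by (simp add: L.diff)
    ultimately have "x - y \<in> ?K" by blast
    then have "x - y \<in> span BK" using BK(3) by blast
    then have "x - y \<in> span (BK \<union> P)" using span_mono[of BK "BK \<union> P"] by blast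
    moreover have "y \<in> span (BK \<union> P)" using y(1) span_mono[of P "BK \<union> P"] by blast
    ultimately have "(x - y) + y \<in> span (BK \<union> P)" by (rule span_add)
    then show "x \<in> span (BK \<union> P)" by simp
  qed
  have indep: "independent (BK \<union> P)"
  proof (rule independent_if_scalars_zero)
    show "finite (BK \<union> P)" using finBK finP by simp
    fix h x assume sum0: "(\<Sum>x\<in>BK \<union> P. h x *s x) = 0" and xin: "x \<in> BK \<union> P"
    have split: "(\<Sum>x\<in>BK \<union> P. h x *s x) = (\<Sum>x\<in>BK. h x *s x) + (\<Sum>x\<in>P. h x *s x)"
      using sum.union_disjoint[OF finBK finP disj] by simp
    have fBK: "f (\<Sum>x\<in>BK. h x *s x) = 0"
      using BK(1) by (auto simp add: L.sum L.scale intro!: sum.neutral)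
    have "f (\<Sum>x\<in>P. h x *s x) = (\<Sum>x\<in>P. h x *s f x)" by (simp add: L.sum L.scale)
    also have "\<dots> = (\<Sum>c\<in>C. h (g c) *s c)"
      unfolding P_def using sum.reindex[OF injg, of "\<lambda>x. h x *s f x"] g by simp
    finally have eqC: "f (\<Sum>x\<in>P. h x *s x) = (\<Sum>c\<in>C. h (g c) *s c)" .
    have "f (\<Sum>x\<in>BK \<union> P. h x *s x) = 0" using sum0 by simp
    then have "(\<Sum>c\<in>C. h (g c) *s c) = 0" using split fBK eqC by (simp add: L.add)
    then have hP: "\<And>c. c \<in> C \<Longrightarrow> h (g c) = 0"
      using independentD[OF C(2) finC subset_refl, of "\<lambda>c. h (g c)"] by blast
    have "(\<Sum>x\<in>P. h x *s x) = 0" using hP P_def by (auto intro!: sum.neutral)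
    then have "(\<Sum>x\<in>BK. h x *s x) = 0" using sum0 split by simp
    then have hBK: "\<And>u. u \<in> BK \<Longrightarrow> h u = 0"
      using independentD[OF BK(2) finBK subset_refl, of h] by blast
    show "h x = 0" using xin hBK hP P_def by auto
  qed
  have sub: "BK \<union> P \<subseteq> S" using BK(1) PS by blast
  have "card (BK \<union> P) \<le> dim S" using indep_card_le_dim[OF sub indep SW W] .
  moreover have "dim S \<le> card (BK \<union> P)" using dim_le_card[OF span1] finBK finP by simp
  moreover have "card (BK \<union> P) = card BK + card P" using card_Un_disjoint[OF finBK finP disj] .
  ultimately show ?thesis using BK(4) C(4) cardP by simp
qed


interpretation CS: vector_space "chain_scale :: 'k::field \<Rightarrow> (nat set \<Rightarrow> 'k) \<Rightarrow> _"
  by unfold_locales (auto simp: chain_scale_def fun_eq_iff algebra_simps)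

lemma chain_scale_apply[simp]: "chain_scale a c x = a * c x"
  by (simp add: chain_scale_def)

lemma sum_fun_apply: "(sum f A) x = (\<Sum>a\<in>A. f a x)"
  by (induction A rule: infinite_finite_induct) auto

definition delta :: "nat set \<Rightarrow> nat set \<Rightarrow> 'k::field" where
  "delta \<sigma> = (\<lambda>\<tau>. if \<tau> = \<sigma> then 1 else 0)"

definition Zc :: "'k::field itself \<Rightarrow> nat set \<Rightarrow> nat set set \<Rightarrow> int \<Rightarrow> (nat set \<Rightarrow> 'k) set" where
  "Zc K V E i = {c \<in> chains V E i. boundary V E i c = 0}"

definition Bc :: "'k::field itself \<Rightarrow> nat set \<Rightarrow> nat set set \<Rightarrow> int \<Rightarrow> (nat set \<Rightarrow> 'k) set" where
  "Bc K V E i = boundary V E (i + 1) ` chains V E (i + 1)"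

lemma reduced_betti_alt:
  "reduced_betti K V E i = CS.dim (Zc K V E i) - CS.dim (Bc K V E i)"
  by (simp add: reduced_betti_def Zc_def Bc_def)

lemma faces_subset_Pow: "clique_faces V E i \<subseteq> Pow V"
  by (auto simp: clique_faces_def is_clique_def)

lemma finite_faces: "finite V \<Longrightarrow> finite (clique_faces V E i)"
  using finite_subset[OF faces_subset_Pow] by simp

lemma chains_subspace: "CS.subspace (chains V E i)"
  unfolding CS.subspace_def chains_def by (auto simp: plus_fun_def)

lemma chains_in_span:
  assumes "finite V"
  shows "chains V E i \<subseteq> CS.span ((delta :: _ \<Rightarrow> _ \<Rightarrow> 'k::field) ` clique_faces V E i)"
proof
  fix c :: "nat set \<Rightarrow> 'k" assume c: "c \<in> chains V E i"
  let ?F = "clique_faces V E i"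
  have "c = (\<Sum>\<sigma>\<in>?F. chain_scale (c \<sigma>) (delta \<sigma>))"
  proof
    fix \<tau>
    show "c \<tau> = (\<Sum>\<sigma>\<in>?F. chain_scale (c \<sigma>) (delta \<sigma>)) \<tau>"
      unfolding sum_fun_apply using c finite_faces[OF assms]
      by (auto simp: delta_def chains_def if_distrib cong: if_cong)
  qed
  also have "\<dots> \<in> CS.span (delta ` ?F)"
    by (intro CS.span_sum CS.span_scale CS.span_base) auto
  finally show "c \<in> CS.span (delta ` ?F)" .
qed

lemma dim_chains_le:
  assumes "finite V"
  shows "CS.dim (chains V E i :: (nat set \<Rightarrow> 'k::field) set) \<le> card (clique_faces V E i)"
proof -
  have "CS.dim (chains V E i :: (nat set \<Rightarrow> 'k::field) set) \<le> card ((delta :: _ \<Rightarrow> _ \<Rightarrow> 'k) ` clique_faces V E i)"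
    using CS.dim_le_card[OF chains_in_span[OF assms]] finite_faces[OF assms] by blast
  also have "\<dots> \<le> card (clique_faces V E i)" using card_image_le finite_faces[OF assms] by blast
  finally show ?thesis .
qed

lemma delta_inj: "inj (delta :: _ \<Rightarrow> _ \<Rightarrow> 'k::field)"
  by (rule injI) (simp add: delta_def fun_eq_iff, metis one_neq_zero)

lemma dim_chains_ge:
  assumes "finite V"
  shows "card (clique_faces V E i) \<le> CS.dim (chains V E i :: (nat set \<Rightarrow> 'k::field) set)"
proof -
  let ?F = "clique_faces V E i"
  let ?D = "(delta :: _ \<Rightarrow> _ \<Rightarrow> 'k) ` ?F"
  have sub: "?D \<subseteq> chains V E i" by (auto simp: delta_def chains_def)
  have ind: "CS.independent ?D"
  proof (rule CS.independent_if_scalars_zero)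
    show "finite ?D" using finite_faces[OF assms] by simp
    fix g x assume s: "(\<Sum>x\<in>?D. chain_scale (g x) x) = 0" and x: "x \<in> ?D"
    then obtain \<sigma> where \<sigma>: "\<sigma> \<in> ?F" "x = delta \<sigma>" by blast
    have "(\<Sum>x\<in>?D. chain_scale (g x) x) \<sigma> = 0" using s by simp
    then have "(\<Sum>y\<in>?D. g y * y \<sigma>) = 0" by (simp add: sum_fun_apply)
    moreover have "(\<Sum>y\<in>?D. g y * y \<sigma>) = g x"
    proof -
      have "(\<Sum>y\<in>?D. g y * y \<sigma>) = (\<Sum>y\<in>{x}. g y * y \<sigma>)"
      proof (rule sum.mono_neutral_right)
        show "finite ?D" using finite_faces[OF assms] by simp
        show "{x} \<subseteq> ?D" using x by simp
        show "\<forall>y\<in>?D - {x}. g y * y \<sigma> = 0" using \<sigma> by (auto simp: delta_def split: if_split_asm)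
      qed
      then show ?thesis using \<sigma> by (simp add: delta_def)
    qed
    ultimately show "g x = 0" by simp
  qed
  have "card ?D \<le> CS.dim (chains V E i :: (nat set \<Rightarrow> 'k::field) set)"
    using CS.indep_card_le_dim[OF sub ind chains_in_span[OF assms]] finite_faces[OF assms] by blast
  moreover have "card ?D = card ?F" using card_image[OF inj_on_subset[OF delta_inj]] by blast
  ultimately show ?thesis by simp
qed

lemma boundary_linear: "Vector_Spaces.linear chain_scale chain_scale (boundary V E i :: (nat set \<Rightarrow> 'k::field) \<Rightarrow> _)"
  unfolding Vector_Spaces.linear_iff
proof (intro conjI allI)
  show "vector_space (chain_scale :: 'k \<Rightarrow> _)" by unfold_locales
  show "vector_space (chain_scale :: 'k \<Rightarrow> _)" by unfold_locales
  fix x y :: "nat set \<Rightarrow> 'k"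
  show "boundary V E i (x + y) = boundary V E i x + boundary V E i y"
    by (auto simp: boundary_def fun_eq_iff sum.distrib ring_distribs)
  fix a :: 'k
  show "boundary V E i (chain_scale a x) = chain_scale a (boundary V E i x)"
    by (auto simp: boundary_def fun_eq_iff sum_distrib_left ac_simps)
qed

lemma boundary_in_chains: "boundary V E (i + 1) c \<in> chains V E i"
  by (auto simp: boundary_def chains_def)

lemma boundary_in_chains': "boundary V E i c \<in> chains V E (i - 1)"
  by (auto simp: boundary_def chains_def)

lemma Zc_subspace: "CS.subspace (Zc K V E i)"
proof -
  interpret L: Vector_Spaces.linear chain_scale chain_scale "boundary V E i :: (nat set \<Rightarrow> 'k::field) \<Rightarrow> _"
    by (rule boundary_linear)
  have "Zc K V E i = chains V E i \<inter> {c. boundary V E i c = 0}" by (auto simp: Zc_def)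
  then show ?thesis using CS.subspace_inter[OF chains_subspace L.subspace_kernel] by simp
qed

lemma Bc_subspace: "CS.subspace (Bc K V E i)"
proof -
  interpret L: Vector_Spaces.linear chain_scale chain_scale "boundary V E (i+1) :: (nat set \<Rightarrow> 'k::field) \<Rightarrow> _"
    by (rule boundary_linear)
  show ?thesis unfolding Bc_def by (rule L.subspace_image[OF chains_subspace])
qed

lemma Zc_sub: "Zc K V E i \<subseteq> chains V E i" by (auto simp: Zc_def)
lemma Bc_sub: "Bc K V E i \<subseteq> chains V E i" using boundary_in_chains by (auto simp: Bc_def)


lemma faces_empty_out:
  assumes "finite V" "\<not> (-1 \<le> i \<and> i < int (card V))"
  shows "clique_faces V E i = {}"
proof (rule ccontr)
  assume "clique_faces V E i \<noteq> {}"
  then obtain \<sigma> where s: "\<sigma> \<subseteq> V" "finite \<sigma>" "int (card \<sigma>) = i + 1"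
    by (auto simp: clique_faces_def is_clique_def)
  have "card \<sigma> \<le> card V" using card_mono[OF assms(1) s(1)] .
  then show False using s(3) assms(2) by linarith
qed

lemma betti_out:
  assumes "finite V" "\<not> (-1 \<le> i \<and> i < int (card V))"
  shows "reduced_betti K V E i = 0"
proof -
  have "chains V E i \<subseteq> CS.span ((delta :: _ \<Rightarrow> _ \<Rightarrow> 'a::field) ` clique_faces V E i)"
    using chains_in_span[OF assms(1)] .
  then have "chains V E i \<subseteq> CS.span ({} :: (nat set \<Rightarrow> 'a) set)"
    using faces_empty_out[OF assms] by simp
  then have "Zc K V E i \<subseteq> CS.span ({} :: (nat set \<Rightarrow> 'a) set)" using Zc_sub by blast
  then have "CS.dim (Zc K V E i) \<le> 0" using CS.dim_le_card[of "Zc K V E i" "{}"] by simp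
  then show ?thesis by (simp add: reduced_betti_alt)
qed

lemma total_betti_range_aux:
  assumes "finite V" "N \<ge> int (card V) - 1"
  shows "(\<Sum>i\<in>{-1..N}. reduced_betti K V E i) = (\<Sum>i\<in>{-1..int (card V) - 1}. reduced_betti K V E i)"
proof (rule sum.mono_neutral_right)
  show "finite {-1..N}" by simp
  show "{-1..int (card V) - 1} \<subseteq> {-1..N}" using assms(2) by auto
  show "\<forall>i\<in>{-1..N} - {-1..int (card V) - 1}. reduced_betti K V E i = 0"
    by (auto intro!: betti_out[OF assms(1)])
qed

lemma total_betti_range:
  assumes "finite V" "N \<ge> int (card V) - 1"
  shows "total_betti K V E = (\<Sum>i\<in>{-1..N}. reduced_betti K V E i)"
proof -
  have "total_betti K V E = (\<Sum>i\<in>{-1..int (card V)}. reduced_betti K V E i)" by (simp add: total_betti_def)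
  also have "\<dots> = (\<Sum>i\<in>{-1..int (card V) - 1}. reduced_betti K V E i)"
    by (rule total_betti_range_aux) (use assms in simp_all)
  also have "\<dots> = (\<Sum>i\<in>{-1..N}. reduced_betti K V E i)"
    by (rule total_betti_range_aux[symmetric]) (use assms in simp_all)
  finally show ?thesis .
qed

lemma sum_shift_link:
  assumes "finite V" "M \<ge> int (card V)"
  shows "(\<Sum>i\<in>{-1..M}. reduced_betti K V E (i - 1)) = total_betti K V E"
proof -
  have "(\<Sum>i\<in>{-1..M}. reduced_betti K V E (i - 1)) = (\<Sum>j\<in>(\<lambda>i. i - 1) ` {-1..M}. reduced_betti K V E j)"
    by (subst sum.reindex) (auto simp: inj_on_def)
  also have "(\<lambda>i. i - 1) ` {-1..M} = insert (-2) {-1..M - 1}"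
  proof -
    have "(\<lambda>i. i - 1) ` {-1..M} = {-2..M-1}" by (simp add: image_diff_atLeastAtMost)
    also have "\<dots> = insert (-2) {-1..M - 1}" using assms(2) by auto
    finally show ?thesis .
  qed
  also have "(\<Sum>j\<in>insert (-2) {-1..M - 1}. reduced_betti K V E j) = reduced_betti K V E (-2) + (\<Sum>j\<in>{-1..M - 1}. reduced_betti K V E j)"
    by (subst sum.insert) auto
  also have "reduced_betti K V E (-2) = 0" by (rule betti_out[OF assms(1)]) simp
  also have "(\<Sum>j\<in>{-1..M - 1}. reduced_betti K V E j) = total_betti K V E"
    by (rule total_betti_range[symmetric]) (use assms in simp_all)
  finally show ?thesis by simp
qed

definition vpart :: "nat \<Rightarrow> (nat set \<Rightarrow> 'k::field) \<Rightarrow> nat set \<Rightarrow> 'k" where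
  "vpart v c = (\<lambda>\<tau>. if v \<notin> \<tau> then c (insert v \<tau>) else 0)"

definition vfree :: "nat \<Rightarrow> (nat set \<Rightarrow> 'k::field) \<Rightarrow> nat set \<Rightarrow> 'k" where
  "vfree v c = (\<lambda>\<sigma>. if v \<in> \<sigma> then 0 else c \<sigma>)"

definition cone :: "nat \<Rightarrow> (nat set \<Rightarrow> 'k::field) \<Rightarrow> nat set \<Rightarrow> 'k" where
  "cone v e = (\<lambda>\<sigma>. if v \<in> \<sigma> then e (\<sigma> - {v}) else 0)"

lemma vpart_linear: "Vector_Spaces.linear chain_scale chain_scale (vpart v :: (nat set \<Rightarrow> 'k::field) \<Rightarrow> _)"
  unfolding Vector_Spaces.linear_iff
proof (intro conjI allI)
  show "vector_space (chain_scale :: 'k \<Rightarrow> _)" by unfold_locales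
  show "vector_space (chain_scale :: 'k \<Rightarrow> _)" by unfold_locales
  fix x y :: "nat set \<Rightarrow> 'k" and a :: 'k
  show "vpart v (x + y) = vpart v x + vpart v y" by (auto simp: vpart_def fun_eq_iff)
  show "vpart v (chain_scale a x) = chain_scale a (vpart v x)" by (auto simp: vpart_def fun_eq_iff)
qed

locale vdec =
  fixes V :: "nat set" and E :: "nat set set" and v :: nat
  assumes finV: "finite V" and vV: "v \<in> V" and vmax: "\<And>u. u \<in> V \<Longrightarrow> u \<le> v"
begin

abbreviation "V' \<equiv> V - {v}"
abbreviation "NL \<equiv> {u \<in> V - {v}. {u, v} \<in> E}"

lemma vNL: "v \<notin> NL" by simp

lemma face_insert_v:
  assumes "v \<notin> \<tau>"
  shows "insert v \<tau> \<in> clique_faces V E i \<longleftrightarrow> \<tau> \<in> clique_faces NL E (i - 1)"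
proof (cases "finite \<tau>")
  case True
  have c: "card (insert v \<tau>) = card \<tau> + 1" using True assms by simp
  show ?thesis
    unfolding clique_faces_def is_clique_def using True assms c vV
    by (auto simp: insert_commute)
next
  case False
  then show ?thesis by (auto simp: clique_faces_def)
qed


lemma NL_sub: "NL \<subseteq> V" by blast

lemma faces_NL_V': "clique_faces NL E i \<subseteq> clique_faces V' E i"
  by (auto simp: clique_faces_def is_clique_def)

lemma faces_V'_V: "clique_faces V' E i \<subseteq> clique_faces V E i"
  by (auto simp: clique_faces_def is_clique_def)

lemma faces_V_V': "v \<notin> \<sigma> \<Longrightarrow> \<sigma> \<in> clique_faces V E i \<longleftrightarrow> \<sigma> \<in> clique_faces V' E i"
  by (auto simp: clique_faces_def is_clique_def)

lemma faces_NL_nov: "\<sigma> \<in> clique_faces NL E i \<Longrightarrow> v \<notin> \<sigma>"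
  by (auto simp: clique_faces_def is_clique_def)

lemma faces_V'_nov: "\<sigma> \<in> clique_faces V' E i \<Longrightarrow> v \<notin> \<sigma>"
  by (auto simp: clique_faces_def is_clique_def)

lemma vpart_boundary:
  "vpart v (boundary V E i c) = boundary NL E (i - 1) (vpart v c)"
proof
  fix \<tau>
  show "vpart v (boundary V E i c) \<tau> = boundary NL E (i - 1) (vpart v c) \<tau>"
  proof (cases "v \<in> \<tau>")
    case True
    then have "\<tau> \<notin> clique_faces NL E (i - 1 - 1)" using faces_NL_nov by blast
    then show ?thesis using True by (simp add: vpart_def boundary_def)
  next
    case False
    note nv = False
    show ?thesis
    proof (cases "insert v \<tau> \<in> clique_faces V E (i - 1)")
      case False
      then have "\<tau> \<notin> clique_faces NL E (i - 1 - 1)" using face_insert_v[OF nv] by simp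
      then show ?thesis using False nv by (simp add: vpart_def boundary_def)
    next
      case True
      have tf: "\<tau> \<in> clique_faces NL E (i - 1 - 1)" using True face_insert_v[OF nv] by simp
      have S: "{x \<in> V - insert v \<tau>. insert x (insert v \<tau>) \<in> clique_faces V E i} =
               {x \<in> NL - \<tau>. insert x \<tau> \<in> clique_faces NL E (i - 1)}" (is "?S1 = ?S2")
      proof (intro set_eqI iffI)
        fix x assume x: "x \<in> ?S1"
        then have xv: "x \<noteq> v" "x \<notin> \<tau>" by auto
        have "v \<notin> insert x \<tau>" using xv nv by simp
        moreover have "insert v (insert x \<tau>) \<in> clique_faces V E i" using x by (simp add: insert_commute)
        ultimately have "insert x \<tau> \<in> clique_faces NL E (i - 1)" using face_insert_v by blast
        moreover then have "x \<in> NL" using faces_subset_Pow by blast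
        ultimately show "x \<in> ?S2" using xv by blast
      next
        fix x assume x: "x \<in> ?S2"
        then have xv: "x \<noteq> v" "x \<notin> \<tau>" "x \<in> V" by auto
        have "v \<notin> insert x \<tau>" using xv nv by simp
        then have "insert v (insert x \<tau>) \<in> clique_faces V E i" using x face_insert_v by blast
        then show "x \<in> ?S1" using xv by (simp add: insert_commute)
      qed
      have T: "(-1) ^ card {y \<in> insert v \<tau>. y < x} * c (insert x (insert v \<tau>)) =
               (-1) ^ card {y \<in> \<tau>. y < x} * vpart v c (insert x \<tau>)" if "x \<in> ?S2" for x
      proof -
        have "x \<in> V" "x \<noteq> v" using that by auto
        then have "\<not> v < x" using vmax by (simp add: not_less)
        then have "{y \<in> insert v \<tau>. y < x} = {y \<in> \<tau>. y < x}" by auto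
        moreover have "vpart v c (insert x \<tau>) = c (insert x (insert v \<tau>))"
          using \<open>x \<noteq> v\<close> nv by (simp add: vpart_def insert_commute)
        ultimately show ?thesis by simp
      qed
      have "vpart v (boundary V E i c) \<tau> = boundary V E i c (insert v \<tau>)" using nv by (simp add: vpart_def)
      also have "\<dots> = (\<Sum>x\<in>?S1. (-1) ^ card {y \<in> insert v \<tau>. y < x} * c (insert x (insert v \<tau>)))"
        unfolding boundary_def by (simp only: True if_True)
      also have "\<dots> = (\<Sum>x\<in>?S2. (-1) ^ card {y \<in> \<tau>. y < x} * vpart v c (insert x \<tau>))"
        unfolding S by (rule sum.cong[OF refl T])
      also have "\<dots> = boundary NL E (i - 1) (vpart v c) \<tau>"
        unfolding boundary_def by (simp only: tf if_True)
      finally show ?thesis .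
    qed
  qed
qed

lemma vpart_chains: "c \<in> chains V E i \<Longrightarrow> vpart v c \<in> chains NL E (i - 1)"
  unfolding chains_def vpart_def using face_insert_v faces_NL_nov by fastforce

lemma cone_chains: "e \<in> chains NL E (i - 1) \<Longrightarrow> cone v e \<in> chains V E i"
proof -
  assume e: "e \<in> chains NL E (i - 1)"
  show "cone v e \<in> chains V E i" unfolding chains_def
  proof (intro CollectI allI impI)
    fix \<sigma> assume s: "\<sigma> \<notin> clique_faces V E i"
    show "cone v e \<sigma> = 0"
    proof (cases "v \<in> \<sigma>")
      case True
      then have "insert v (\<sigma> - {v}) = \<sigma>" by auto
      then have "\<sigma> - {v} \<notin> clique_faces NL E (i - 1)" using face_insert_v[of "\<sigma> - {v}" i] s by simp
      then show ?thesis using e True by (simp add: cone_def chains_def)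
    qed (simp add: cone_def)
  qed
qed

lemma vpart_cone: assumes e: "e \<in> chains NL E j" shows "vpart v (cone v e) = e"
proof
  fix \<tau>
  show "vpart v (cone v e) \<tau> = e \<tau>"
  proof (cases "v \<in> \<tau>")
    case True
    then have "\<tau> \<notin> clique_faces NL E j" using faces_NL_nov by blast
    then show ?thesis using e True by (simp add: vpart_def chains_def)
  next
    case False
    then have "insert v \<tau> - {v} = \<tau>" by auto
    then show ?thesis using False by (simp add: vpart_def cone_def)
  qed
qed

lemma vpart_image_chains: "vpart v ` chains V E i = chains NL E (i - 1)"
proof
  show "vpart v ` chains V E i \<subseteq> chains NL E (i - 1)" using vpart_chains by blast
  show "chains NL E (i - 1) \<subseteq> vpart v ` chains V E i"
  proof
    fix e assume e: "e \<in> chains NL E (i - 1)"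
    then have "vpart v (cone v e) = e" by (rule vpart_cone)
    then show "e \<in> vpart v ` chains V E i" using cone_chains[OF e] by (metis imageI)
  qed
qed

lemma boundary_split:
  assumes nv: "v \<notin> \<tau>"
  shows "boundary V E i c \<tau> = boundary V' E i (vfree v c) \<tau> +
     (if \<tau> \<in> clique_faces NL E (i - 1) then (-1) ^ card \<tau> * c (insert v \<tau>) else 0)"
proof (cases "\<tau> \<in> clique_faces V E (i - 1)")
  case False
  then have "\<tau> \<notin> clique_faces V' E (i - 1)" using faces_V'_V by blast
  moreover have "\<tau> \<notin> clique_faces NL E (i - 1)" using calculation faces_NL_V' by blast
  ultimately show ?thesis using False by (simp add: boundary_def)
next
  case True
  have T': "\<tau> \<in> clique_faces V' E (i - 1)" using True faces_V_V'[OF nv] by simp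
  let ?S = "{x \<in> V - \<tau>. insert x \<tau> \<in> clique_faces V E i}"
  let ?S' = "{x \<in> V' - \<tau>. insert x \<tau> \<in> clique_faces V' E i}"
  let ?f = "\<lambda>x. (-1) ^ card {y \<in> \<tau>. y < x} * c (insert x \<tau>)"
  have finS: "finite ?S" using finV by simp
  have S': "?S - {v} = ?S'"
  proof (intro set_eqI iffI)
    fix x assume "x \<in> ?S - {v}"
    then show "x \<in> ?S'" using faces_V_V'[of "insert x \<tau>" i] nv by auto
  next
    fix x assume "x \<in> ?S'"
    then show "x \<in> ?S - {v}" using faces_V'_V by auto
  qed
  have vS: "v \<in> ?S \<longleftrightarrow> \<tau> \<in> clique_faces NL E (i - 1)"
    using face_insert_v[OF nv, of i] nv vV by simp
  have sumS': "sum ?f ?S' = boundary V' E i (vfree v c) \<tau>"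
  proof -
    have "boundary V' E i (vfree v c) \<tau> = (\<Sum>x\<in>?S'. (-1) ^ card {y \<in> \<tau>. y < x} * vfree v c (insert x \<tau>))"
      using T' by (simp add: boundary_def)
    also have "\<dots> = sum ?f ?S'"
      by (rule sum.cong) (auto simp: vfree_def nv)
    finally show ?thesis by simp
  qed
  have cardv: "card {y \<in> \<tau>. y < v} = card \<tau>"
  proof -
    have "\<tau> \<subseteq> V" using True faces_subset_Pow by blast
    then have "{y \<in> \<tau>. y < v} = \<tau>" using vmax nv by (force simp: order.order_iff_strict)
    then show ?thesis by simp
  qed
  have "boundary V E i c \<tau> = sum ?f ?S" using True by (simp add: boundary_def)
  also have "\<dots> = sum ?f ?S' + (if \<tau> \<in> clique_faces NL E (i - 1) then ?f v else 0)"
  proof (cases "v \<in> ?S")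
    case True
    then show ?thesis using sum.remove[OF finS True, of ?f] S' vS by (simp add: add.commute)
  next
    case False
    then have "?S - {v} = ?S" by simp
    then show ?thesis using S' vS False by simp
  qed
  finally show ?thesis using sumS' cardv by simp
qed

lemma chains_V'_V: "chains V' E i \<subseteq> chains V E i"
  unfolding chains_def using faces_V'_V by blast

lemma chains_V'_vanish: "c \<in> chains V' E i \<Longrightarrow> v \<in> \<sigma> \<Longrightarrow> c \<sigma> = 0"
  unfolding chains_def using faces_V'_nov by blast

lemma boundary_V'_eq:
  assumes c: "c \<in> chains V' E i"
  shows "boundary V E i c = boundary V' E i c"
proof
  fix \<tau>
  show "boundary V E i c \<tau> = boundary V' E i c \<tau>"
  proof (cases "v \<in> \<tau>")
    case True
    then have "\<tau> \<notin> clique_faces V' E (i - 1)" using faces_V'_nov by blast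
    moreover have "boundary V E i c \<tau> = 0"
      using chains_V'_vanish[OF c] True by (simp add: boundary_def)
    ultimately show ?thesis by (simp add: boundary_def)
  next
    case False
    have "vfree v c = c" using chains_V'_vanish[OF c] by (auto simp: vfree_def fun_eq_iff)
    moreover have "c (insert v \<tau>) = 0" using chains_V'_vanish[OF c] by simp
    ultimately show ?thesis using boundary_split[OF False, of i c] by simp
  qed
qed

lemma vpart_zero_iff:
  assumes "c \<in> chains V E i"
  shows "vpart v c = 0 \<longleftrightarrow> c \<in> chains V' E i"
proof
  assume h: "vpart v c = 0"
  show "c \<in> chains V' E i" unfolding chains_def
  proof (intro CollectI allI impI)
    fix \<sigma> assume s: "\<sigma> \<notin> clique_faces V' E i"
    show "c \<sigma> = 0"
    proof (cases "v \<in> \<sigma>")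
      case True
      then have "insert v (\<sigma> - {v}) = \<sigma>" by auto
      then have "c \<sigma> = vpart v c (\<sigma> - {v})" by (simp add: vpart_def)
      then show ?thesis using h by simp
    next
      case False
      then have "\<sigma> \<notin> clique_faces V E i" using s faces_V_V' by blast
      then show ?thesis using assms by (simp add: chains_def)
    qed
  qed
next
  assume c: "c \<in> chains V' E i"
  show "vpart v c = 0"
  proof
    fix \<tau>
    have "c (insert v \<tau>) = 0" by (rule chains_V'_vanish[OF c]) simp
    then show "vpart v c \<tau> = 0 \<tau>" by (simp add: vpart_def)
  qed
qed


lemma sign_sq: "(-1::'a::comm_ring_1) ^ k * (-1) ^ k = 1"
proof -
  have "(-1::'a) ^ k * (-1) ^ k = ((-1) * (-1)) ^ k" by (rule power_mult_distrib[symmetric])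
  also have "\<dots> = 1" by simp
  finally show ?thesis .
qed

lemma betti_deletion:
  "reduced_betti (K :: 'k::field itself) V E i \<le> reduced_betti K V' E i + reduced_betti K NL E (i - 1)"
proof -
  interpret P: Vector_Spaces.linear chain_scale chain_scale "vpart v :: (nat set \<Rightarrow> 'k::field) \<Rightarrow> _"
    by (rule vpart_linear)
  let ?Zg = "Zc K V E i" and ?Bg = "Bc K V E i"
  let ?Z' = "Zc K V' E i" and ?B' = "Bc K V' E i"
  let ?ZL = "Zc K NL E (i - 1)" and ?BL = "Bc K NL E (i - 1)"
  let ?F = "(delta :: _ \<Rightarrow> _ \<Rightarrow> 'k) ` clique_faces V E i"
  let ?FL = "(delta :: _ \<Rightarrow> _ \<Rightarrow> 'k) ` clique_faces NL E (i - 1)"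
  have finF: "finite ?F" using finite_faces[OF finV] by simp
  have finNL: "finite NL" using finV by simp
  have finFL: "finite ?FL" using finite_faces[OF finNL] by simp
  have spanV: "chains V E i \<subseteq> CS.span ?F" by (rule chains_in_span[OF finV])
  have spanNL: "chains NL E (i - 1) \<subseteq> CS.span ?FL" by (rule chains_in_span[OF finNL])
  have e1: "{z \<in> ?Zg. vpart v z = 0} = ?Z'"
  proof (intro set_eqI iffI)
    fix z assume z: "z \<in> {z \<in> ?Zg. vpart v z = 0}"
    then have zc: "z \<in> chains V' E i" using vpart_zero_iff by (auto simp: Zc_def)
    then show "z \<in> ?Z'" using z boundary_V'_eq[OF zc] by (auto simp: Zc_def)
  next
    fix z assume z: "z \<in> ?Z'"
    then have zc: "z \<in> chains V' E i" by (simp add: Zc_def)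
    then have "z \<in> chains V E i" using chains_V'_V by blast
    then show "z \<in> {z \<in> ?Zg. vpart v z = 0}"
      using z boundary_V'_eq[OF zc] vpart_zero_iff zc by (auto simp: Zc_def)
  qed
  have e2: "vpart v ` ?Zg \<subseteq> ?ZL"
  proof
    fix w assume "w \<in> vpart v ` ?Zg"
    then obtain z where z: "z \<in> ?Zg" "w = vpart v z" by blast
    have "w \<in> chains NL E (i - 1)" using z vpart_chains by (auto simp: Zc_def)
    moreover have "boundary NL E (i - 1) w = 0"
      using z vpart_boundary[of i z] by (auto simp: Zc_def)
    ultimately show "w \<in> ?ZL" by (simp add: Zc_def)
  qed
  have e3: "vpart v ` ?Bg = ?BL"
  proof -
    have "vpart v ` ?Bg = (\<lambda>c. vpart v (boundary V E (i + 1) c)) ` chains V E (i + 1)"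
      by (auto simp: Bc_def image_image)
    also have "\<dots> = (\<lambda>c. boundary NL E i (vpart v c)) ` chains V E (i + 1)"
    proof -
      have vb: "\<And>c. vpart v (boundary V E (i + 1) c) = boundary NL E i (vpart v c)"
        using vpart_boundary[of "i + 1"] by simp
      show ?thesis by (simp only: vb)
    qed
    also have "\<dots> = boundary NL E i ` (vpart v ` chains V E (i + 1))" by (simp add: image_image)
    also have "\<dots> = boundary NL E i ` chains NL E i"
    proof -
      have h: "vpart v ` chains V E (i + 1) = chains NL E i" using vpart_image_chains[of "i + 1"] by simp
      show ?thesis by (simp only: h)
    qed
    also have "\<dots> = ?BL" by (simp add: Bc_def)
    finally show ?thesis .
  qed
  have e4: "?B' \<subseteq> {b \<in> ?Bg. vpart v b = 0}"
  proof
    fix b assume "b \<in> ?B'"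
    then obtain c where c: "c \<in> chains V' E (i + 1)" "b = boundary V' E (i + 1) c" by (auto simp: Bc_def)
    have "b = boundary V E (i + 1) c" using c(2) boundary_V'_eq[OF c(1)] by simp
    moreover have "c \<in> chains V E (i + 1)" using c chains_V'_V by blast
    ultimately have "b \<in> ?Bg" by (auto simp: Bc_def)
    moreover have "b \<in> chains V' E i" using c boundary_in_chains by simp
    ultimately show "b \<in> {b \<in> ?Bg. vpart v b = 0}"
      using vpart_zero_iff chains_V'_V by blast
  qed
  have Zsp: "?Zg \<subseteq> CS.span ?F" using Zc_sub spanV by blast
  have Bsp: "?Bg \<subseteq> CS.span ?F" using Bc_sub spanV by blast
  have r1: "CS.dim ?Zg = CS.dim ?Z' + CS.dim (vpart v ` ?Zg)"
    using CS.rank_nullity[OF vpart_linear[of v] Zc_subspace Zsp finF] e1 by simp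
  have r2: "CS.dim (vpart v ` ?Zg) \<le> CS.dim ?ZL"
    using CS.dim_subset_fin[OF e2 _ finFL] Zc_sub spanNL by blast
  have r3: "CS.dim ?Bg = CS.dim {b \<in> ?Bg. vpart v b = 0} + CS.dim ?BL"
    using CS.rank_nullity[OF vpart_linear[of v] Bc_subspace Bsp finF] e3 by simp
  have r4: "CS.dim ?B' \<le> CS.dim {b \<in> ?Bg. vpart v b = 0}"
    using CS.dim_subset_fin[OF e4 _ finF] Bsp by blast
  show ?thesis unfolding reduced_betti_alt using r1 r2 r3 r4 by linarith
qed

lemma cone_betti:
  assumes cv: "\<And>u. u \<in> V' \<Longrightarrow> {u, v} \<in> E"
  shows "reduced_betti (K :: 'k::field itself) V E i = 0"
proof -
  have NLV: "NL = V'" using cv by blast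
  have ZB: "Zc K V E i \<subseteq> Bc K V E i"
  proof
    fix z :: "nat set \<Rightarrow> 'k" assume z: "z \<in> Zc K V E i"
    then have zc: "z \<in> chains V E i" and zb: "boundary V E i z = 0" by (auto simp: Zc_def)
    define a where "a = vfree v z"
    have ac: "a \<in> chains V' E i"
      unfolding chains_def a_def vfree_def using zc faces_V_V' by (auto simp: chains_def)
    have acL: "a \<in> chains NL E (i + 1 - 1)" using ac NLV by simp
    define X where "X = cone v a"
    have Xc: "X \<in> chains V E (i + 1)" unfolding X_def by (rule cone_chains[OF acL])
    define s :: 'k where "s = (-1) ^ nat (i + 1)"
    have key: "chain_scale s (boundary V E (i + 1) X) = z"
    proof
      fix \<sigma>
      show "chain_scale s (boundary V E (i + 1) X) \<sigma> = z \<sigma>"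
      proof (cases "v \<in> \<sigma>")
        case True
        define \<tau> where "\<tau> = \<sigma> - {v}"
        have nv: "v \<notin> \<tau>" and st: "\<sigma> = insert v \<tau>" using True by (auto simp: \<tau>_def)
        have "boundary V E (i + 1) X \<sigma> = vpart v (boundary V E (i + 1) X) \<tau>"
          using nv st by (simp add: vpart_def)
        also have "\<dots> = boundary NL E i (vpart v X) \<tau>" using vpart_boundary[of "i + 1" X] by simp
        also have "vpart v X = a" unfolding X_def using vpart_cone[OF acL] .
        finally have bX: "boundary V E (i + 1) X \<sigma> = boundary V' E i a \<tau>" using NLV by simp
        have sp: "boundary V E i z \<tau> = boundary V' E i a \<tau> +
            (if \<tau> \<in> clique_faces NL E (i - 1) then (-1) ^ card \<tau> * z (insert v \<tau>) else 0)"
          unfolding a_def by (rule boundary_split[OF nv])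
        show ?thesis
        proof (cases "\<tau> \<in> clique_faces NL E (i - 1)")
          case True
          then have ct: "int (card \<tau>) = i" by (simp add: clique_faces_def)
          then have "nat (i + 1) = Suc (card \<tau>)" by simp
          then have sv: "s = - ((-1) ^ card \<tau>)" by (simp add: s_def)
          have "0 = boundary V' E i a \<tau> + (-1) ^ card \<tau> * z \<sigma>" using sp zb True st by simp
          then have "(-1) ^ card \<tau> * z \<sigma> = - boundary V' E i a \<tau>"
            by (simp add: eq_neg_iff_add_eq_0 add.commute)
          then have "(-1) ^ card \<tau> * ((-1) ^ card \<tau> * z \<sigma>) = (-1) ^ card \<tau> * (- boundary V' E i a \<tau>)"
            by simp
          then have "(-1) ^ card \<tau> * ((-1) ^ card \<tau> * z \<sigma>) = - ((-1) ^ card \<tau> * boundary V' E i a \<tau>)"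
            by simp
          then have "z \<sigma> = - ((-1) ^ card \<tau> * boundary V' E i a \<tau>)"
            by (simp add: mult.assoc[symmetric] sign_sq)
          then show ?thesis using bX sv by simp
        next
          case False
          then have "\<sigma> \<notin> clique_faces V E i" using face_insert_v[OF nv, of i] st by simp
          then have z0: "z \<sigma> = 0" using zc by (simp add: chains_def)
          have "\<tau> \<notin> clique_faces V' E (i - 1)" using False NLV by simp
          then have "boundary V' E i a \<tau> = 0" by (simp add: boundary_def)
          then show ?thesis using bX z0 by simp
        qed
      next
        case False
        have vfX: "vfree v X = 0" by (auto simp: vfree_def X_def cone_def fun_eq_iff)
        interpret Bl: Vector_Spaces.linear chain_scale chain_scale "boundary V' E (i + 1) :: (nat set \<Rightarrow> 'k) \<Rightarrow> _"
          by (rule boundary_linear)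
        have sp: "boundary V E (i + 1) X \<sigma> =
            (if \<sigma> \<in> clique_faces NL E i then (-1) ^ card \<sigma> * X (insert v \<sigma>) else 0)"
          using boundary_split[OF False, of "i + 1" X] vfX by simp
        have Xs: "X (insert v \<sigma>) = z \<sigma>"
          using False by (simp add: X_def cone_def a_def vfree_def)
        show ?thesis
        proof (cases "\<sigma> \<in> clique_faces NL E i")
          case True
          then have "int (card \<sigma>) = i + 1" by (simp add: clique_faces_def)
          then have "nat (i + 1) = card \<sigma>" by simp
          then have "s = (-1) ^ card \<sigma>" by (simp add: s_def)
          then show ?thesis using sp True Xs by (simp add: mult.assoc[symmetric] sign_sq)
        next
          case F2: False
          then have "\<sigma> \<notin> clique_faces V E i" using faces_V_V'[OF False] NLV by simp
          then have "z \<sigma> = 0" using zc by (simp add: chains_def)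
          then show ?thesis using sp F2 by simp
        qed
      qed
    qed
    interpret Bl: Vector_Spaces.linear chain_scale chain_scale "boundary V E (i + 1) :: (nat set \<Rightarrow> 'k) \<Rightarrow> _"
      by (rule boundary_linear)
    have "chain_scale s X \<in> chains V E (i + 1)" using Xc chains_subspace CS.subspace_scale by blast
    moreover have "boundary V E (i + 1) (chain_scale s X) = z" using key by (simp add: Bl.scale)
    ultimately show "z \<in> Bc K V E i" unfolding Bc_def by (metis imageI)
  qed
  let ?F = "(delta :: _ \<Rightarrow> _ \<Rightarrow> 'k) ` clique_faces V E i"
  have finF: "finite ?F" using finite_faces[OF finV] by simp
  have "Bc K V E i \<subseteq> CS.span ?F" using Bc_sub chains_in_span[OF finV] by blast
  then have "CS.dim (Zc K V E i) \<le> CS.dim (Bc K V E i)" using CS.dim_subset_fin[OF ZB _ finF] by blast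
  then show ?thesis by (simp add: reduced_betti_alt)
qed

end


context vdec
begin

lemma total_deletion:
  "total_betti (K :: 'k::field itself) V E \<le> total_betti K V' E + total_betti K NL E"
proof -
  have finV': "finite V'" using finV by simp
  have finNL: "finite NL" using finV by simp
  have cV': "card V' = card V - 1" using vV finV by simp
  have cNL: "card NL \<le> card V" using finV by (intro card_mono) auto
  have "total_betti K V E = (\<Sum>i\<in>{-1..int (card V)}. reduced_betti K V E i)" by (simp add: total_betti_def)
  also have "\<dots> \<le> (\<Sum>i\<in>{-1..int (card V)}. reduced_betti K V' E i + reduced_betti K NL E (i - 1))"
    by (rule sum_mono) (rule betti_deletion)
  also have "\<dots> = (\<Sum>i\<in>{-1..int (card V)}. reduced_betti K V' E i) + (\<Sum>i\<in>{-1..int (card V)}. reduced_betti K NL E (i - 1))"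
    by (simp add: sum.distrib)
  also have "(\<Sum>i\<in>{-1..int (card V)}. reduced_betti K V' E i) = total_betti K V' E"
    by (rule total_betti_range[symmetric, OF finV']) (use cV' in simp)
  also have "(\<Sum>i\<in>{-1..int (card V)}. reduced_betti K NL E (i - 1)) = total_betti K NL E"
    by (rule sum_shift_link[OF finNL]) (use cNL in simp)
  finally show ?thesis .
qed

lemma total_cone:
  assumes "\<And>u. u \<in> V' \<Longrightarrow> {u, v} \<in> E"
  shows "total_betti (K :: 'k::field itself) V E = 0"
  unfolding total_betti_def by (intro sum.neutral ballI cone_betti[OF assms])

end

lemma betti_le_faces:
  assumes "finite V"
  shows "reduced_betti (K :: 'k::field itself) V E i \<le> card (clique_faces V E i)"
proof -
  have "CS.dim (Zc K V E i) \<le> CS.dim (chains V E i :: (nat set \<Rightarrow> 'k) set)"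
    by (rule CS.dim_subset_fin[OF Zc_sub chains_in_span[OF assms] finite_imageI[OF finite_faces[OF assms]]])
  also have "\<dots> \<le> card (clique_faces V E i)" by (rule dim_chains_le[OF assms])
  finally show ?thesis by (simp add: reduced_betti_alt)
qed

lemma betti_lower:
  assumes "finite V" "clique_faces V E (i + 1) = {}"
  shows "int (card (clique_faces V E i)) - int (card (clique_faces V E (i - 1)))
           \<le> int (reduced_betti (K :: 'k::field itself) V E i)"
proof -
  interpret Bl: Vector_Spaces.linear chain_scale chain_scale "boundary V E i :: (nat set \<Rightarrow> 'k) \<Rightarrow> _"
    by (rule boundary_linear)
  let ?F = "(delta :: _ \<Rightarrow> _ \<Rightarrow> 'k) ` clique_faces V E i"
  have finF: "finite ?F" using finite_faces[OF assms(1)] by simp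
  have "chains V E (i + 1) \<subseteq> CS.span ((delta :: _ \<Rightarrow> _ \<Rightarrow> 'k) ` clique_faces V E (i + 1))"
    by (rule chains_in_span[OF assms(1)])
  then have c0: "chains V E (i + 1) \<subseteq> CS.span ({} :: (nat set \<Rightarrow> 'k) set)" using assms(2) by simp
  have "Bc K V E i \<subseteq> CS.span ({} :: (nat set \<Rightarrow> 'k) set)"
  proof
    fix b assume "b \<in> Bc K V E i"
    then obtain c where c: "c \<in> chains V E (i + 1)" "b = boundary V E (i + 1) c" by (auto simp: Bc_def)
    then have "c = 0" using c0 by auto
    interpret Bl1: Vector_Spaces.linear chain_scale chain_scale "boundary V E (i + 1) :: (nat set \<Rightarrow> 'k) \<Rightarrow> _"
      by (rule boundary_linear)
    have "b = 0" using c \<open>c = 0\<close> by simp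
    then show "b \<in> CS.span {}" by simp
  qed
  then have B0: "CS.dim (Bc K V E i) = 0" using CS.dim_le_card[of "Bc K V E i" "{}"] by simp
  have rn: "CS.dim (chains V E i :: (nat set \<Rightarrow> 'k) set) = CS.dim (Zc K V E i) + CS.dim (boundary V E i ` (chains V E i :: (nat set \<Rightarrow> 'k) set))"
    using CS.rank_nullity[OF boundary_linear[of V E i] chains_subspace chains_in_span[OF assms(1)] finF]
    by (simp add: Zc_def)
  have "boundary V E i ` chains V E i \<subseteq> (chains V E (i - 1) :: (nat set \<Rightarrow> 'k) set)"
    using boundary_in_chains' by blast
  then have "CS.dim (boundary V E i ` (chains V E i :: (nat set \<Rightarrow> 'k) set)) \<le> CS.dim (chains V E (i - 1) :: (nat set \<Rightarrow> 'k) set)"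
    by (rule CS.dim_subset_fin[OF _ chains_in_span[OF assms(1)] finite_imageI[OF finite_faces[OF assms(1)]]])
  also have "\<dots> \<le> card (clique_faces V E (i - 1))" by (rule dim_chains_le[OF assms(1)])
  finally have d1: "CS.dim (boundary V E i ` (chains V E i :: (nat set \<Rightarrow> 'k) set)) \<le> card (clique_faces V E (i - 1))" .
  have d2: "card (clique_faces V E i) \<le> CS.dim (chains V E i :: (nat set \<Rightarrow> 'k) set)"
    by (rule dim_chains_ge[OF assms(1)])
  show ?thesis unfolding reduced_betti_alt using B0 rn d1 d2 by linarith
qed


lemma cmp_vertices_mem:
  "(j, x) \<in> cmp_vertices (i1 # replicate k 1) \<longleftrightarrow> j \<le> k \<and> x < (if j = 0 then i1 else 1)"
proof (cases j)
  case 0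
  then show ?thesis by (simp add: cmp_vertices_def)
next
  case (Suc j')
  then show ?thesis by (auto simp: cmp_vertices_def)
qed

lemma cmp_vertices_mem1[simp]:
  "(j, x) \<in> cmp_vertices (i1 # replicate k (Suc 0)) \<longleftrightarrow> j \<le> k \<and> x < (if j = 0 then i1 else 1)"
  using cmp_vertices_mem[of j x i1 k] by simp

lemma cmp_vertices_mem2[simp]:
  "(j, x) \<in> cmp_vertices (i1 # Suc 0 # replicate k (Suc 0)) \<longleftrightarrow> j \<le> Suc k \<and> x < (if j = 0 then i1 else 1)"
  using cmp_vertices_mem[of j x i1 "Suc k"] by simp

lemma cmp_edge_iff:
  assumes "x \<in> cmp_vertices ps" "y \<in> cmp_vertices ps" "x \<noteq> y"
  shows "{x, y} \<in> cmp_edges ps \<longleftrightarrow> fst x \<noteq> fst y"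
proof
  assume "{x, y} \<in> cmp_edges ps"
  then obtain a b where ab: "{x, y} = {a, b}" "fst a \<noteq> fst b" by (auto simp: cmp_edges_def)
  then have "(x = a \<and> y = b) \<or> (x = b \<and> y = a)" by (auto simp: doubleton_eq_iff)
  then show "fst x \<noteq> fst y" using ab(2) by auto
next
  assume "fst x \<noteq> fst y"
  then show "{x, y} \<in> cmp_edges ps" unfolding cmp_edges_def using assms by blast
qed

lemma has_copy_mono:
  "has_induced_copy VH EH V' E \<Longrightarrow> V' \<subseteq> V \<Longrightarrow> has_induced_copy VH EH V E"
  unfolding has_induced_copy_def by (meson order_trans)

context vdec
begin

lemma extend_copy:
  assumes h: "has_induced_copy (cmp_vertices (i1 # replicate k 1)) (cmp_edges (i1 # replicate k 1)) NL E"
  shows "has_induced_copy (cmp_vertices (i1 # replicate (Suc k) 1)) (cmp_edges (i1 # replicate (Suc k) 1)) V E"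
proof -
  let ?A = "cmp_vertices (i1 # replicate k 1)"
  let ?B = "cmp_vertices (i1 # replicate (Suc k) 1)"
  from h[unfolded has_induced_copy_def] obtain f where f: "inj_on f ?A \<and> f ` ?A \<subseteq> NL \<and>
      (\<forall>u\<in>?A. \<forall>w\<in>?A. u \<noteq> w \<longrightarrow> ({u, w} \<in> cmp_edges (i1 # replicate k 1) \<longleftrightarrow> {f u, f w} \<in> E))" ..
  have f1: "inj_on f ?A" using f by (rule conjunct1)
  have f2: "f ` ?A \<subseteq> NL" using f by simp
  have f3: "\<And>u w. u \<in> ?A \<Longrightarrow> w \<in> ?A \<Longrightarrow> u \<noteq> w \<Longrightarrow> ({u, w} \<in> cmp_edges (i1 # replicate k 1) \<longleftrightarrow> {f u, f w} \<in> E)"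
    using f by simp
  define g where "g = f((Suc k, 0) := v)"
  have B: "?B = insert (Suc k, 0) ?A"
    by (auto simp: cmp_vertices_mem)
  have nA: "(Suc k, 0) \<notin> ?A" by (simp add: cmp_vertices_mem)
  have gA: "\<And>u. u \<in> ?A \<Longrightarrow> g u = f u" using nA by (auto simp: g_def)
  have fNL: "\<And>u. u \<in> ?A \<Longrightarrow> f u \<in> NL" using f2 by (simp add: image_subset_iff)
  have AB: "?A \<subseteq> ?B" using B by blast
  show ?thesis unfolding has_induced_copy_def
  proof (intro exI conjI ballI impI)
    show "inj_on g ?B" unfolding B
    proof (rule inj_on_insert[THEN iffD2], intro conjI)
      show "inj_on g ?A" using inj_on_cong[of ?A g f] gA f1 by simp
      show "g (Suc k, 0) \<notin> g ` (?A - {(Suc k, 0)})"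
      proof
        assume "g (Suc k, 0) \<in> g ` (?A - {(Suc k, 0)})"
        then obtain u where u: "u \<in> ?A" "g (Suc k, 0) = g u" by blast
        then have "v = f u" using gA by (simp add: g_def)
        then show False using fNL[OF u(1)] by simp
      qed
    qed
    show "g ` ?B \<subseteq> V"
    proof
      fix y assume "y \<in> g ` ?B"
      then obtain u where u: "u \<in> ?B" "y = g u" by (rule imageE) simp
      show "y \<in> V"
      proof (cases "u = (Suc k, 0)")
        case True
        then show ?thesis using u vV by (simp add: g_def)
      next
        case False
        then have uA: "u \<in> ?A" using u(1) B by (metis insertE)
        then have "y \<in> NL" using u(2) gA[OF uA] fNL[OF uA] by simp
        then show ?thesis by simp
      qed
    qed
  next
    fix u w assume u: "u \<in> ?B" and w: "w \<in> ?B" and uw: "u \<noteq> w"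
    show "{u, w} \<in> cmp_edges (i1 # replicate (Suc k) 1) \<longleftrightarrow> {g u, g w} \<in> E"
    proof (cases "u = (Suc k, 0)")
      case True
      then have "w \<noteq> (Suc k, 0)" using uw by simp
      then have wA: "w \<in> ?A" using w B by (metis insertE)
      then have "fst w \<noteq> Suc k" by (cases w) (simp add: cmp_vertices_mem)
      then have "{u, w} \<in> cmp_edges (i1 # replicate (Suc k) 1)" using cmp_edge_iff[OF u w uw] True by simp
      moreover have "{g u, g w} \<in> E" using True gA[OF wA] fNL[OF wA] by (simp add: g_def insert_commute)
      ultimately show ?thesis by simp
    next
      case False
      note uF = False
      show ?thesis
      proof (cases "w = (Suc k, 0)")
        case True
        then have "u \<noteq> (Suc k, 0)" using uw by simp
        then have uA: "u \<in> ?A" using u B by (metis insertE)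
        then have "fst u \<noteq> Suc k" by (cases u) (simp add: cmp_vertices_mem)
        then have "{u, w} \<in> cmp_edges (i1 # replicate (Suc k) 1)" using cmp_edge_iff[OF u w uw] True by simp
        moreover have "{g u, g w} \<in> E" using True gA[OF uA] fNL[OF uA] by (simp add: g_def)
        ultimately show ?thesis by simp
      next
        case False
        then have uA: "u \<in> ?A" and wA: "w \<in> ?A" using u w uF B by (metis insertE)+
        have "{u, w} \<in> cmp_edges (i1 # replicate (Suc k) 1) \<longleftrightarrow> fst u \<noteq> fst w"
          by (rule cmp_edge_iff[OF u w uw])
        also have "\<dots> \<longleftrightarrow> {u, w} \<in> cmp_edges (i1 # replicate k 1)"
          by (rule cmp_edge_iff[OF uA wA uw, symmetric])
        also have "\<dots> \<longleftrightarrow> {f u, f w} \<in> E" by (rule f3[OF uA wA uw])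
        finally show ?thesis using gA[OF uA] gA[OF wA] by simp
      qed
    qed
  qed
qed

end

lemma total_empty_le: "total_betti (K :: 'k::field itself) {} E \<le> 1"
proof -
  have "total_betti K {} E = (\<Sum>i\<in>{-1..-1}. reduced_betti K {} E i)"
    by (rule total_betti_range) simp_all
  also have "\<dots> = reduced_betti K {} E (-1)" by simp
  also have "\<dots> \<le> card (clique_faces {} E (-1))" by (rule betti_le_faces) simp
  also have "\<dots> \<le> card (Pow ({} :: nat set))" by (rule card_mono) (use faces_subset_Pow[of "{}" E "-1"] in simp_all)
  finally show ?thesis by simp
qed

lemma upper_bound:
  assumes i1: "1 \<le> i1" "i1 \<le> 2"
  shows "finite V \<Longrightarrow> \<not> has_induced_copy (cmp_vertices (i1 # replicate k 1)) (cmp_edges (i1 # replicate k 1)) V E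
    \<Longrightarrow> total_betti (K :: 'k::field itself) V E \<le> (card V + 1) ^ k"
proof (induction k arbitrary: V)
  case 0
  show ?case
  proof (cases "V = {}")
    case True
    then show ?thesis using total_empty_le by simp
  next
    case False
    define v where "v = Max V"
    interpret vdec V E v
      by unfold_locales (use 0(1) False in \<open>auto simp: v_def\<close>)
    show ?thesis
    proof (cases "i1 = 1")
      case True
      have "has_induced_copy (cmp_vertices (i1 # replicate 0 1)) (cmp_edges (i1 # replicate 0 1)) V E"
        unfolding has_induced_copy_def
      proof (intro exI[of _ "\<lambda>_. v"] conjI ballI impI)
        show "inj_on (\<lambda>_. v) (cmp_vertices (i1 # replicate 0 1))"
          using True by (auto simp: inj_on_def cmp_vertices_def)
        show "(\<lambda>_. v) ` cmp_vertices (i1 # replicate 0 1) \<subseteq> V" using vV by auto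
      next
        fix u w assume "u \<in> cmp_vertices (i1 # replicate 0 1)" "w \<in> cmp_vertices (i1 # replicate 0 1)" "u \<noteq> w"
        then show "{u, w} \<in> cmp_edges (i1 # replicate 0 1) \<longleftrightarrow> {v, v} \<in> E"
          using True by (auto simp: cmp_vertices_def)
      qed
      then show ?thesis using 0(2) by simp
    next
      case False
      then have i2: "i1 = 2" using i1 by simp
      have "\<And>u. u \<in> V' \<Longrightarrow> {u, v} \<in> E"
      proof (rule ccontr)
        fix u assume u: "u \<in> V'" and ne: "{u, v} \<notin> E"
        define f :: "nat \<times> nat \<Rightarrow> nat" where "f = (\<lambda>x. if x = (0, 0) then u else v)"
        let ?A = "cmp_vertices (i1 # replicate 0 1)"
        have A: "?A = {(0, 0), (0, 1)}" using i2 by (auto simp: cmp_vertices_def)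
        have "has_induced_copy ?A (cmp_edges (i1 # replicate 0 1)) V E"
          unfolding has_induced_copy_def
        proof (intro exI[of _ f] conjI ballI impI)
          have uv: "u \<noteq> v" using u by simp
          show "inj_on f ?A" unfolding A using uv by (simp add: f_def)
          show "f ` ?A \<subseteq> V" unfolding A using u vV by (simp add: f_def)
        next
          fix x y assume x: "x \<in> ?A" and y: "y \<in> ?A" and xy: "x \<noteq> y"
          have x2: "x = (0, 0) \<or> x = (0, 1)" using x A by simp
          have y2: "y = (0, 0) \<or> y = (0, 1)" using y A by simp
          have "fst x = fst y" using x2 y2 by auto
          then have "{x, y} \<notin> cmp_edges (i1 # replicate 0 1)" using cmp_edge_iff[OF x y xy] by simp
          moreover have "{f x, f y} \<notin> E"
          proof -
            have "(x = (0, 0) \<and> y = (0, 1)) \<or> (x = (0, 1) \<and> y = (0, 0))" using x2 y2 xy by auto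
            then have "{f x, f y} = {u, v}" by (auto simp: f_def)
            then show ?thesis using ne by simp
          qed
          ultimately show "{x, y} \<in> cmp_edges (i1 # replicate 0 1) \<longleftrightarrow> {f x, f y} \<in> E" by simp
        qed
        then show False using 0(2) by simp
      qed
      then have "total_betti K V E = 0" by (rule total_cone)
      then show ?thesis by simp
    qed
  qed
next
  case (Suc k)
  note outer = Suc.IH
  show ?case using Suc.prems
  proof (induction "card V" arbitrary: V rule: less_induct)
    case less
    show ?case
    proof (cases "V = {}")
      case True
      then show ?thesis using total_empty_le[of K E] by simp
    next
      case False
      define v where "v = Max V"
      interpret vdec V E v
        by unfold_locales (use less(2) False in \<open>auto simp: v_def\<close>)
      have cV: "card V \<ge> 1" using less(2) False by (simp add: Suc_leI card_gt_0_iff)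
      have cV': "card V' = card V - 1" using vV less(2) by simp
      have fV': "finite V'" using less(2) by simp
      have fNL: "finite NL" using less(2) by simp
      have cNL: "card NL \<le> card V - 1"
      proof -
        have "card NL \<le> card V'" by (rule card_mono[OF fV']) auto
        then show ?thesis using cV' by simp
      qed
      have hV': "\<not> has_induced_copy (cmp_vertices (i1 # replicate (Suc k) 1)) (cmp_edges (i1 # replicate (Suc k) 1)) V' E"
      proof
        assume "has_induced_copy (cmp_vertices (i1 # replicate (Suc k) 1)) (cmp_edges (i1 # replicate (Suc k) 1)) V' E"
        then have "has_induced_copy (cmp_vertices (i1 # replicate (Suc k) 1)) (cmp_edges (i1 # replicate (Suc k) 1)) V E"
          by (rule has_copy_mono) auto
        then show False using less(3) by simp
      qed
      have hNL: "\<not> has_induced_copy (cmp_vertices (i1 # replicate k 1)) (cmp_edges (i1 # replicate k 1)) NL E"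
      proof
        assume "has_induced_copy (cmp_vertices (i1 # replicate k 1)) (cmp_edges (i1 # replicate k 1)) NL E"
        then have "has_induced_copy (cmp_vertices (i1 # replicate (Suc k) 1)) (cmp_edges (i1 # replicate (Suc k) 1)) V E"
          by (rule extend_copy)
        then show False using less(3) by simp
      qed
      have t1: "total_betti K V' E \<le> (card V' + 1) ^ Suc k"
        using less(1)[OF _ fV' hV'] cV' cV by simp
      have t2: "total_betti K NL E \<le> (card NL + 1) ^ k" by (rule outer[OF fNL hNL])
      have t2': "(card NL + 1) ^ k \<le> card V ^ k" using cNL cV by (intro power_mono) simp_all
      have "total_betti K V E \<le> card V ^ Suc k + card V ^ k"
        using total_deletion[of K] t1 t2 t2' cV' cV by simp
      also have "\<dots> \<le> (card V + 1) ^ Suc k"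
      proof -
        have "card V ^ Suc k + card V ^ k = (card V + 1) * card V ^ k" by simp
        also have "\<dots> \<le> (card V + 1) * (card V + 1) ^ k" by (intro mult_left_mono power_mono) simp_all
        finally show ?thesis by simp
      qed
      finally show ?thesis .
    qed
  qed
qed


definition PV :: "nat \<Rightarrow> nat \<Rightarrow> nat set" where "PV k s = {..<k * s}"
definition PE :: "nat \<Rightarrow> nat \<Rightarrow> nat set set" where
  "PE k s = {{x, y} | x y. x < k * s \<and> y < k * s \<and> x div s \<noteq> y div s}"

lemma PE_edge: assumes "{a, b} \<in> PE k s" shows "a div s \<noteq> b div s"
proof -
  obtain x y where xy: "{a, b} = {x, y}" "x div s \<noteq> y div s" using assms by (auto simp: PE_def)
  then have "(a = x \<and> b = y) \<or> (a = y \<and> b = x)" by (auto simp: doubleton_eq_iff)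
  then show ?thesis using xy(2) by auto
qed

lemma PE_mem: "x < k * s \<Longrightarrow> y < k * s \<Longrightarrow> x div s \<noteq> y div s \<Longrightarrow> {x, y} \<in> PE k s"
  unfolding PE_def by blast

lemma simple_PVPE: "simple_graph (PV k s) (PE k s)"
  unfolding simple_graph_def
proof (intro conjI ballI)
  show "finite (PV k s)" by (simp add: PV_def)
  fix e assume "e \<in> PE k s"
  then obtain x y where "e = {x, y}" "x < k * s" "y < k * s" "x div s \<noteq> y div s" by (auto simp: PE_def)
  then show "\<exists>u v. e = {u, v} \<and> u \<noteq> v \<and> u \<in> PV k s \<and> v \<in> PV k s" by (auto simp: PV_def)
qed

lemma clique_card_PV:
  assumes s: "s \<ge> 1" and c: "is_clique (PV k s) (PE k s) \<sigma>"
  shows "card \<sigma> \<le> k"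
proof -
  have sub: "\<sigma> \<subseteq> {..<k * s}" using c by (simp add: is_clique_def PV_def)
  have inj: "inj_on (\<lambda>x. x div s) \<sigma>"
  proof (rule inj_onI, rule ccontr)
    fix a b assume a: "a \<in> \<sigma>" and b: "b \<in> \<sigma>" and eq: "a div s = b div s" and ne: "a \<noteq> b"
    then have "{a, b} \<in> PE k s" using c by (simp add: is_clique_def)
    then show False using PE_edge eq by blast
  qed
  have img: "(\<lambda>x. x div s) ` \<sigma> \<subseteq> {..<k}"
  proof
    fix y assume "y \<in> (\<lambda>x. x div s) ` \<sigma>"
    then obtain x where x: "x \<in> \<sigma>" "y = x div s" by blast
    then have "x < k * s" using sub by auto
    then have "x div s < k" by (simp add: less_mult_imp_div_less)
    then show "y \<in> {..<k}" using x by simp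
  qed
  have "card \<sigma> = card ((\<lambda>x. x div s) ` \<sigma>)" using card_image[OF inj] by simp
  also have "\<dots> \<le> card {..<k}" by (rule card_mono[OF _ img]) simp
  finally show ?thesis by simp
qed

lemma PV_free:
  assumes s: "s \<ge> 1" and i1: "1 \<le> i1"
  shows "\<not> has_induced_copy (cmp_vertices (i1 # replicate k 1)) (cmp_edges (i1 # replicate k 1)) (PV k s) (PE k s)"
proof
  let ?A = "cmp_vertices (i1 # replicate k 1)"
  assume "has_induced_copy ?A (cmp_edges (i1 # replicate k 1)) (PV k s) (PE k s)"
  from this[unfolded has_induced_copy_def] obtain f where f: "inj_on f ?A \<and> f ` ?A \<subseteq> PV k s \<and>
      (\<forall>u\<in>?A. \<forall>w\<in>?A. u \<noteq> w \<longrightarrow> ({u, w} \<in> cmp_edges (i1 # replicate k 1) \<longleftrightarrow> {f u, f w} \<in> PE k s))" ..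
  have f1: "inj_on f ?A" using f by (rule conjunct1)
  have f2: "f ` ?A \<subseteq> PV k s" using f by simp
  have f3: "\<And>u w. u \<in> ?A \<Longrightarrow> w \<in> ?A \<Longrightarrow> u \<noteq> w \<Longrightarrow> ({u, w} \<in> cmp_edges (i1 # replicate k 1) \<longleftrightarrow> {f u, f w} \<in> PE k s)"
    using f by simp
  define T where "T = (\<lambda>j. (j, 0::nat)) ` {..k}"
  have TA: "T \<subseteq> ?A" using i1 by (auto simp: T_def)
  have cT: "card T = Suc k" unfolding T_def by (subst card_image) (auto simp: inj_on_def)
  have cl: "is_clique (PV k s) (PE k s) (f ` T)"
    unfolding is_clique_def
  proof (intro conjI ballI impI)
    show "f ` T \<subseteq> PV k s" using f2 TA by blast
    fix a b assume a: "a \<in> f ` T" and b: "b \<in> f ` T" and ab: "a \<noteq> b"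
    obtain j where j: "j \<le> k" "a = f (j, 0)" using a by (auto simp: T_def)
    obtain j' where j': "j' \<le> k" "b = f (j', 0)" using b by (auto simp: T_def)
    have jA: "(j, 0) \<in> ?A" and jA': "(j', 0) \<in> ?A" using j j' TA by (auto simp: T_def)
    have "j \<noteq> j'" using ab j j' by auto
    then have "{(j, 0), (j', 0)} \<in> cmp_edges (i1 # replicate k 1)"
      using cmp_edge_iff[OF jA jA'] by simp
    then show "{a, b} \<in> PE k s" using f3[OF jA jA'] \<open>j \<noteq> j'\<close> j j' by simp
  qed
  have "card (f ` T) = Suc k" using card_image[OF inj_on_subset[OF f1 TA]] cT by simp
  then show False using clique_card_PV[OF s cl] by simp
qed

lemma faces_top_empty:
  assumes "s \<ge> 1"
  shows "clique_faces (PV k s) (PE k s) (int k) = {}"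
proof (rule ccontr)
  assume "clique_faces (PV k s) (PE k s) (int k) \<noteq> {}"
  then obtain \<sigma> where "is_clique (PV k s) (PE k s) \<sigma>" "int (card \<sigma>) = int k + 1"
    by (auto simp: clique_faces_def)
  then show False using clique_card_PV[OF assms] by fastforce
qed

lemma divmod_aux:
  assumes "r < (s::nat)"
  shows "(j * s + r) div s = j" "(j * s + r) mod s = r"
  using assms by simp_all

lemma faces_lower:
  assumes s: "s \<ge> 1"
  shows "s ^ k \<le> card (clique_faces (PV k s) (PE k s) (int k - 1))"
proof -
  define PS where "PS = PiE {..<k} (\<lambda>_. {..<s::nat})"
  define \<phi> where "\<phi> t = (\<lambda>j. j * s + t j) ` {..<k}" for t :: "nat \<Rightarrow> nat"
  have inj1: "inj_on (\<lambda>j. j * s + t j) {..<k}" if "\<forall>j<k. t j < s" for t :: "nat \<Rightarrow> nat"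
  proof (rule inj_onI)
    fix a b assume a: "a \<in> {..<k}" and b: "b \<in> {..<k}" and eq: "a * s + t a = b * s + t b"
    have "t a < s" "t b < s" using that a b by auto
    then show "a = b" using divmod_aux[of "t a" s a] divmod_aux[of "t b" s b] eq by metis
  qed
  have inF: "\<phi> t \<in> clique_faces (PV k s) (PE k s) (int k - 1)" if t: "\<forall>j<k. t j < s" for t :: "nat \<Rightarrow> nat"
  proof -
    have bound: "j * s + t j < k * s" if "j < k" for j
    proof -
      have "t j < s" using t that by (auto simp: PS_def)
      then have "j * s + t j < (j + 1) * s" by simp
      also have "\<dots> \<le> k * s" using that by (intro mult_right_mono) simp_all
      finally show ?thesis .
    qed
    have sub: "\<phi> t \<subseteq> PV k s" using bound by (auto simp: \<phi>_def PV_def)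
    have cl: "is_clique (PV k s) (PE k s) (\<phi> t)"
      unfolding is_clique_def
    proof (intro conjI ballI impI)
      show "\<phi> t \<subseteq> PV k s" by (rule sub)
      fix a b assume a: "a \<in> \<phi> t" and b: "b \<in> \<phi> t" and ab: "a \<noteq> b"
      obtain j where j: "j < k" "a = j * s + t j" using a by (auto simp: \<phi>_def)
      obtain j' where j': "j' < k" "b = j' * s + t j'" using b by (auto simp: \<phi>_def)
      have "t j < s" "t j' < s" using t j j' by (auto simp: PS_def)
      then have "a div s = j" "b div s = j'" using j j' divmod_aux by auto
      moreover have "j \<noteq> j'" using ab j j' by auto
      ultimately show "{a, b} \<in> PE k s" using PE_mem bound j j' by metis
    qed
    have "card (\<phi> t) = k" unfolding \<phi>_def using card_image[OF inj1[OF t]] by simp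
    then show ?thesis using cl by (simp add: clique_faces_def \<phi>_def)
  qed
  have injphi: "inj_on \<phi> PS"
  proof (rule inj_onI)
    fix t t' assume t: "t \<in> PS" and t': "t' \<in> PS" and eq: "\<phi> t = \<phi> t'"
    show "t = t'"
    proof (rule PiE_ext[OF t[unfolded PS_def] t'[unfolded PS_def]])
      fix j assume j: "j \<in> {..<k}"
      have "j * s + t j \<in> \<phi> t'" using eq j by (auto simp: \<phi>_def)
      then obtain j' where j': "j' < k" "j * s + t j = j' * s + t' j'" by (auto simp: \<phi>_def)
      have "t j < s" "t' j' < s" using t t' j j' by (auto simp: PS_def)
      then have "j = j'" "t j = t' j'" using divmod_aux[of "t j" s j] divmod_aux[of "t' j'" s j'] j'(2) by metis+
      then show "t j = t' j" by simp
    qed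
  qed
  have "s ^ k = card PS" by (simp add: card_PiE PS_def)
  also have "\<dots> = card (\<phi> ` PS)" using card_image[OF injphi] by simp
  also have "\<dots> \<le> card (clique_faces (PV k s) (PE k s) (int k - 1))"
  proof (rule card_mono)
    show "finite (clique_faces (PV k s) (PE k s) (int k - 1))" by (rule finite_faces) (simp add: PV_def)
    show "\<phi> ` PS \<subseteq> clique_faces (PV k s) (PE k s) (int k - 1)"
    proof
      fix x assume "x \<in> \<phi> ` PS"
      then obtain t where t: "t \<in> PS" "x = \<phi> t" by blast
      have "\<forall>j<k. t j < s" using t(1) by (auto simp: PS_def)
      then show "x \<in> clique_faces (PV k s) (PE k s) (int k - 1)" using inF t(2) by simp
    qed
  qed
  finally show ?thesis .
qed

lemma faces_upper:
  assumes s: "s \<ge> 1" and k: "k \<ge> 1"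
  shows "card (clique_faces (PV k s) (PE k s) (int k - 1 - 1)) \<le> (k * s) ^ (k - 1)"
proof -
  have "clique_faces (PV k s) (PE k s) (int k - 1 - 1) \<subseteq> {B. B \<subseteq> PV k s \<and> card B = k - 1}"
    using k by (auto simp: clique_faces_def is_clique_def)
  then have "card (clique_faces (PV k s) (PE k s) (int k - 1 - 1)) \<le> card {B. B \<subseteq> PV k s \<and> card B = k - 1}"
    by (rule card_mono[rotated]) (simp add: PV_def)
  also have "\<dots> = (k * s) choose (k - 1)" by (subst n_subsets) (simp_all add: PV_def)
  also have "\<dots> \<le> (k * s) ^ (k - 1)"
  proof (rule binomial_le_pow)
    show "k - 1 \<le> k * s" using s by (metis diff_le_self le_trans mult_le_mono2 mult_1_right)
  qed
  finally show ?thesis .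
qed

lemma total_PV_lower:
  assumes s: "s \<ge> 1" and k: "k \<ge> 1"
  shows "s ^ k \<le> total_betti (K :: 'k::field itself) (PV k s) (PE k s) + (k * s) ^ (k - 1)"
proof -
  have fin: "finite (PV k s)" by (simp add: PV_def)
  have top: "clique_faces (PV k s) (PE k s) (int k - 1 + 1) = {}" using faces_top_empty[OF s] by simp
  have bl: "int (card (clique_faces (PV k s) (PE k s) (int k - 1))) - int (card (clique_faces (PV k s) (PE k s) (int k - 1 - 1)))
           \<le> int (reduced_betti K (PV k s) (PE k s) (int k - 1))"
    by (rule betti_lower[OF fin top])
  have cardPV: "card (PV k s) = k * s" by (simp add: PV_def)
  have "reduced_betti K (PV k s) (PE k s) (int k - 1) \<le> total_betti K (PV k s) (PE k s)"
    unfolding total_betti_def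
  proof (rule member_le_sum)
    have "k \<le> k * s" using s by simp
    then have "int k \<le> int (card (PV k s))" using cardPV by linarith
    then show "int k - 1 \<in> {-1..int (card (PV k s))}" by simp
  qed simp_all
  then show ?thesis using bl faces_lower[OF s, of k] faces_upper[OF s k] by linarith
qed

lemma total_empty_ge: "1 \<le> total_betti (K :: 'k::field itself) {} E"
proof -
  have top: "clique_faces {} E (-1 + 1) = {}" by (rule faces_empty_out) simp_all
  have low: "clique_faces {} E (-1 - 1) = {}" by (rule faces_empty_out) simp_all
  have mid: "clique_faces {} E (-1) = {{}}" by (auto simp: clique_faces_def is_clique_def)
  have "int 1 \<le> int (reduced_betti K {} E (-1))"
    using betti_lower[OF _ top, of K] low mid by simp
  moreover have "reduced_betti K {} E (-1) \<le> total_betti K {} E"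
    unfolding total_betti_def by (rule member_le_sum) simp_all
  ultimately show ?thesis by linarith
qed


lemma bH_set_props:
  fixes K :: "'k::field itself" and n k i1 :: nat
  assumes i1: "1 \<le> i1" "i1 \<le> 2"
  defines "S \<equiv> {total_betti K V E | V E.
      simple_graph V E \<and> V \<subseteq> {..<n} \<and> \<not> has_induced_copy (cmp_vertices (i1 # replicate k 1)) (cmp_edges (i1 # replicate k 1)) V E}"
  shows "finite S" "S \<noteq> {}" "\<And>x. x \<in> S \<Longrightarrow> x \<le> (n + 1) ^ k"
proof -
  show bnd: "\<And>x. x \<in> S \<Longrightarrow> x \<le> (n + 1) ^ k"
  proof -
    fix x assume "x \<in> S"
    then obtain V E where x: "x = total_betti K V E" and g: "simple_graph V E" "V \<subseteq> {..<n}"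
      and h: "\<not> has_induced_copy (cmp_vertices (i1 # replicate k 1)) (cmp_edges (i1 # replicate k 1)) V E"
      unfolding S_def by blast
    have fV: "finite V" using g(1) by (simp add: simple_graph_def)
    have "card V \<le> n" using card_mono[OF _ g(2)] by simp
    then have "(card V + 1) ^ k \<le> (n + 1) ^ k" by (intro power_mono) simp_all
    moreover have "x \<le> (card V + 1) ^ k" using upper_bound[OF i1 fV h] x by simp
    ultimately show "x \<le> (n + 1) ^ k" by simp
  qed
  show "finite S" using bnd by (meson finite_atMost finite_subset subsetI atMost_iff)
  have "\<not> has_induced_copy (cmp_vertices (i1 # replicate k 1)) (cmp_edges (i1 # replicate k 1)) ({} :: nat set) {}"
  proof
    assume "has_induced_copy (cmp_vertices (i1 # replicate k 1)) (cmp_edges (i1 # replicate k 1)) ({} :: nat set) {}"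
    then obtain f where "f ` cmp_vertices (i1 # replicate k 1) \<subseteq> ({} :: nat set)" by (auto simp: has_induced_copy_def)
    moreover have "(0, 0) \<in> cmp_vertices (i1 # replicate k 1)" using i1 by simp
    ultimately show False by blast
  qed
  then have "total_betti K {} {} \<in> S" unfolding S_def by (force simp: simple_graph_def)
  then show "S \<noteq> {}" by blast
qed

lemma bH_upper:
  assumes i1: "1 \<le> i1" "i1 \<le> 2"
  shows "b_H (K :: 'k::field itself) (cmp_vertices (i1 # replicate k 1)) (cmp_edges (i1 # replicate k 1)) n \<le> (n + 1) ^ k"
  unfolding b_H_def using bH_set_props[where K=K and n=n and k=k, OF i1] by (simp add: Max_le_iff)

lemma bH_ge:
  assumes i1: "1 \<le> i1" "i1 \<le> 2"
    and g: "simple_graph V E" "V \<subseteq> {..<n}"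
    and h: "\<not> has_induced_copy (cmp_vertices (i1 # replicate k 1)) (cmp_edges (i1 # replicate k 1)) V E"
  shows "total_betti (K :: 'k::field itself) V E \<le> b_H K (cmp_vertices (i1 # replicate k 1)) (cmp_edges (i1 # replicate k 1)) n"
  unfolding b_H_def
proof (rule Max_ge)
  show "finite {total_betti K V E | V E. simple_graph V E \<and> V \<subseteq> {..<n} \<and> \<not> has_induced_copy (cmp_vertices (i1 # replicate k 1)) (cmp_edges (i1 # replicate k 1)) V E}"
    using bH_set_props[where K=K and n=n and k=k, OF i1] by simp
  show "total_betti K V E \<in> {total_betti K V E | V E. simple_graph V E \<and> V \<subseteq> {..<n} \<and> \<not> has_induced_copy (cmp_vertices (i1 # replicate k 1)) (cmp_edges (i1 # replicate k 1)) V E}"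
    using g h by blast
qed

lemma bH_lower_PV:
  assumes i1: "1 \<le> i1" "i1 \<le> 2" and s: "s \<ge> 1" and k: "k \<ge> 1" and ks: "k * s \<le> n"
  shows "s ^ k \<le> b_H (K :: 'k::field itself) (cmp_vertices (i1 # replicate k 1)) (cmp_edges (i1 # replicate k 1)) n + (k * s) ^ (k - 1)"
proof -
  have "total_betti K (PV k s) (PE k s) \<le> b_H K (cmp_vertices (i1 # replicate k 1)) (cmp_edges (i1 # replicate k 1)) n"
    by (rule bH_ge[OF i1 simple_PVPE _ PV_free[OF s i1(1)]]) (use ks in \<open>auto simp: PV_def\<close>)
  then show ?thesis using total_PV_lower[OF s k, of K] by simp
qed

lemma bH_lower0:
  assumes i1: "1 \<le> i1" "i1 \<le> 2"
  shows "1 \<le> b_H (K :: 'k::field itself) (cmp_vertices (i1 # replicate k 1)) (cmp_edges (i1 # replicate k 1)) n"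
proof -
  have "\<not> has_induced_copy (cmp_vertices (i1 # replicate k 1)) (cmp_edges (i1 # replicate k 1)) ({} :: nat set) {}"
  proof
    assume "has_induced_copy (cmp_vertices (i1 # replicate k 1)) (cmp_edges (i1 # replicate k 1)) ({} :: nat set) {}"
    then obtain f where "f ` cmp_vertices (i1 # replicate k 1) \<subseteq> ({} :: nat set)" by (auto simp: has_induced_copy_def)
    moreover have "(0, 0) \<in> cmp_vertices (i1 # replicate k 1)" using i1 by simp
    ultimately show False by blast
  qed
  then have "total_betti K {} {} \<le> b_H K (cmp_vertices (i1 # replicate k 1)) (cmp_edges (i1 # replicate k 1)) n"
    by (intro bH_ge[OF i1]) (auto simp: simple_graph_def)
  then show ?thesis using total_empty_ge[of K "{}"] by simp
qed

theorem theorem1p5: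
  fixes i1 m :: nat
  assumes "1 \<le> i1" and "i1 \<le> 2" and "1 \<le> m"
  shows "(\<lambda>n. real (b_H TYPE('k::field)
              (cmp_vertices (i1 # replicate (m - 1) 1))
              (cmp_edges (i1 # replicate (m - 1) 1)) n))
         \<in> \<Theta>(\<lambda>n. real n ^ (m - 1))"
proof -
  define k where "k = m - 1"
  have i1: "1 \<le> i1" "i1 \<le> 2" using assms by simp_all
  let ?b = "\<lambda>n. b_H TYPE('k::field) (cmp_vertices (i1 # replicate k 1)) (cmp_edges (i1 # replicate k 1)) n"
  have up: "\<And>n. ?b n \<le> (n + 1) ^ k" by (rule bH_upper[OF i1])
  show ?thesis unfolding k_def[symmetric]
  proof (cases "k = 0")
    case True
    have "\<And>n. ?b n = 1"
    proof -
      fix n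
      have "?b n \<le> 1" using up[of n] True by simp
      moreover have "1 \<le> ?b n" by (rule bH_lower0[OF i1])
      ultimately show "?b n = 1" by (rule antisym)
    qed
    then show "(\<lambda>n. real (?b n)) \<in> \<Theta>(\<lambda>n. real n ^ k)"
      using True by (intro bigthetaI'[of 1 1]) simp_all
  next
    case False
    then have k: "k \<ge> 1" by simp
    define N where "N = 2 * k * (2 * k ^ (k - 1) + 1)"
    define c1 :: real where "c1 = 1 / (2 * (2 * real k) ^ k)"
    show "(\<lambda>n. real (?b n)) \<in> \<Theta>(\<lambda>n. real n ^ k)"
    proof (rule bigthetaI'[of c1 "2 ^ k"])
      show "c1 > 0" using k by (simp add: c1_def)
      show "(2::real) ^ k > 0" by simp
      show "\<forall>\<^sub>F n in sequentially. c1 * norm (real n ^ k) \<le> norm (real (?b n)) \<and> norm (real (?b n)) \<le> 2 ^ k * norm (real n ^ k)"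
        using eventually_ge_at_top[of N]
      proof eventually_elim
        case (elim n)
        have nN: "n \<ge> N" by (rule elim)
        have n1: "n \<ge> 1" using nN k by (simp add: N_def)
        have "?b n \<le> (n + 1) ^ k" by (rule up)
        also have "\<dots> \<le> (2 * n) ^ k" using n1 by (intro power_mono) simp_all
        also have "\<dots> = 2 ^ k * n ^ k" by (simp add: power_mult_distrib)
        finally have "real (?b n) \<le> real (2 ^ k * n ^ k)" by (simp only: of_nat_le_iff)
        then have U: "real (?b n) \<le> 2 ^ k * real n ^ k" by simp
        define s where "s = n div k"
        have sN: "s \<ge> 2 * (2 * k ^ (k - 1) + 1)"
        proof -
          have "N div k = 2 * (2 * k ^ (k - 1) + 1)" using k by (simp add: N_def)
          moreover have "N div k \<le> n div k" using nN by (rule div_le_mono)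
          ultimately show ?thesis by (simp add: s_def)
        qed
        have s1: "s \<ge> 1" using sN by simp
        have ks: "k * s \<le> n" by (simp add: s_def)
        have L: "s ^ k \<le> ?b n + (k * s) ^ (k - 1)" by (rule bH_lower_PV[OF i1 s1 k ks])
        have L2: "2 * (k * s) ^ (k - 1) \<le> s ^ k"
        proof -
          have "2 * (k * s) ^ (k - 1) = (2 * k ^ (k - 1)) * s ^ (k - 1)" by (simp add: power_mult_distrib)
          also have "\<dots> \<le> s * s ^ (k - 1)" using sN by (intro mult_right_mono) simp_all
          also have "\<dots> = s ^ k" using k by (simp add: power_eq_if)
          finally show ?thesis .
        qed
        have L3: "s ^ k \<le> 2 * ?b n" using L L2 by linarith
        have nle: "n \<le> 2 * k * s"
        proof -
          have e: "n = k * s + n mod k" by (simp add: s_def)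
          have "n mod k < k" using k by simp
          then have "n < k * s + k" using e by linarith
          also have "\<dots> \<le> 2 * k * s" using s1 by simp
          finally show ?thesis by simp
        qed
        have "n ^ k \<le> (2 * k * s) ^ k" using nle by (rule power_mono) simp
        also have "\<dots> = (2 * k) ^ k * s ^ k" by (simp add: power_mult_distrib)
        also have "\<dots> \<le> (2 * k) ^ k * (2 * ?b n)" using L3 by (rule mult_left_mono) simp
        finally have "real (n ^ k) \<le> real ((2 * k) ^ k * (2 * ?b n))" by (simp only: of_nat_le_iff)
        then have "real n ^ k \<le> (2 * real k) ^ k * (2 * real (?b n))" by simp
        then have Lr: "c1 * real n ^ k \<le> real (?b n)"
          unfolding c1_def using k by (simp add: field_simps)
        show ?case using U Lr by simp
      qed
    qed
  qed
qed


end
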